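(* Let a project have finite state space $\mathbb{X}$, transition probabilities $p(i,j)$, active rewards $R(i)$, discount factor $0<\beta\le1$ and horizon $T$. For a tuple $A=(A_1,\dots,A_T)$ of subsets of $\mathbb{X}$ and $1\le d\le T$, $i\in\mathbb{X}$, let $f_d^A(i)$ be the expected total discounted reward $\mathsf{E}_i[\sum_{t=0}^{\tau-1}\beta^tR(X(t))]$ earned starting in state $i$ with $d$ remaining periods under the stopping rule $\tau$ that, at time $t<d$ (when $d-t$ periods remain) engages the project iff $X(t)\in A_{d-t}$, and stops at the first time this fails or when $t=d$; and let $r_d^A(i)=f_d^{A\cup\{(d,i)\}}(i)$, where $A\cup\{(s,j)\}$ denotes the tuple obtained from $A$ by replacing $A_s$ with $A_s\cup\{j\}$. Let $A$ satisfy $A_1\subseteq A_2\subseteq\dots\subseteq A_T\subseteq\mathbb{X}$. Then for $1\le d\le T$ and $i\in\mathbb{X}$: (a) $r_d^A(i)=R(i)+\beta\sum_{j\in A_{d-1}}p(i,j)r_{d-1}^A(j)$ if $2\le d\le T$, and $r_1^A(i)=R(i)$. (b) $r_d^{A\cup\{(d,i^* )\}}(i)=r_d^A(i)$ for $i^*\in\mathbb{X}\setminus A_d$. (c) $r_d^{A\cup\{(d-1,i^* )\}}(i)=r_d^A(i)+\beta p(i,i^* )r_{d-1}^A(i^* )$ for $i^*\in A_d\setminus A_{d-1}$ (with $d\ge 2$). (d) $r_d^{A\cup\{(s,i^* )\}}(i)=R(i)+\beta\sum_{j\in A_{d-1}}p(i,j)r_{d-1}^{A\cup\{(s,i^* )\}}(j)$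 for $1\le s\le d-2$ and $i^*\in A_{s+1}\setminus A_s$.
   Context: $r_d^A(i)$ is the modified reward measure: the reward measure of the stopping rule with continuation sets $A$, modified so that the project is engaged at least at time 0 in state $i$ with $d$ periods remaining. *)

theory Defs
  imports Complex_Main
begin

text \<open>The stopping rule with continuation sets A (A k used when k periods
 remain) engages at time t < d iff X(t) \<in> A (d - t).  The expected discounted
 reward E_i[sum_{t<tau} beta^t R(X t)] is written out as the sum over t of
 beta^t E_i[1{tau > t} R(X t)], the expectation being a finite sum over paths.\<close>

definition path_set :: "'a set \<Rightarrow> nat \<Rightarrow> 'a list set" where
  "path_set S t = {xs. set xs \<subseteq> S \<and> length xs = t}"

definition fval :: "'a set \<Rightarrow> ('a \<Rightarrow> 'a \<Rightarrow> real) \<Rightarrow> ('a \<Rightarrow> real) \<Rightarrow> real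
    \<Rightarrow> (nat \<Rightarrow> 'a set) \<Rightarrow> nat \<Rightarrow> 'a \<Rightarrow> real" where
  "fval S p R \<beta> A d i =
     (\<Sum>t<d. \<beta> ^ t * (\<Sum>xs\<in>path_set S t.
        (let x = i # xs in
          (if (\<forall>s\<le>t. x ! s \<in> A (d - s))
           then (\<Prod>s<t. p (x ! s) (x ! Suc s)) * R (x ! t) else 0))))"

definition upd :: "(nat \<Rightarrow> 'a set) \<Rightarrow> nat \<Rightarrow> 'a \<Rightarrow> (nat \<Rightarrow> 'a set)" where
  "upd A s j = A(s := A s \<union> {j})"

definition rval :: "'a set \<Rightarrow> ('a \<Rightarrow> 'a \<Rightarrow> real) \<Rightarrow> ('a \<Rightarrow> real) \<Rightarrow> real
    \<Rightarrow> (nat \<Rightarrow> 'a set) \<Rightarrow> nat \<Rightarrow> 'a \<Rightarrow> real" where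
  "rval S p R \<beta> A d i = fval S p R \<beta> (upd A d i) d i"

end

theory Submission
  imports Defs
begin

lemma all_le_Suc: "(\<forall>s\<le>Suc t. P s) \<longleftrightarrow> P 0 \<and> (\<forall>s\<le>t. P (Suc s))"
  apply auto
  apply (case_tac s)
   apply auto
  done

lemma path_set_Suc: "path_set S (Suc t) = (\<lambda>(j,ys). j#ys) ` (S \<times> path_set S t)"
  by (auto simp: path_set_def length_Suc_conv image_iff)

lemma sum_path_Suc:
  "(\<Sum>xs\<in>path_set S (Suc t). h xs) = (\<Sum>j\<in>S. \<Sum>ys\<in>path_set S t. h (j#ys))"
  by (simp add: path_set_Suc sum.reindex inj_on_def sum.cartesian_product case_prod_unfold)

lemma fval_0: "fval S p R \<beta> A 0 i = 0"
  by (simp add: fval_def)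

lemma fval_Suc:
  "fval S p R \<beta> A (Suc n) i =
     (if i \<in> A (Suc n) then R i + \<beta> * (\<Sum>j\<in>S. p i j * fval S p R \<beta> A n j) else 0)"
proof -
  define g where "g m x t = (if (\<forall>s\<le>t. x ! s \<in> A (m - s))
     then (\<Prod>s<t. p (x ! s) (x ! Suc s)) * R (x ! t) else 0)" for m x t
  have fv: "fval S p R \<beta> A m k = (\<Sum>t<m. \<beta>^t * (\<Sum>xs\<in>path_set S t. g m (k#xs) t))" for m k
    unfolding fval_def g_def Let_def by simp
  have g0: "(\<Sum>xs\<in>path_set S 0. g (Suc n) (i#xs) 0) = (if i\<in>A (Suc n) then R i else 0)"
    proof -
    have "path_set S 0 = {[]}" by (auto simp: path_set_def)
    then show ?thesis by (simp add: g_def)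
  qed
  have gS: "g (Suc n) (i#j#ys) (Suc t) = (if i \<in> A (Suc n) then p i j * g n (j#ys) t else 0)"
    for j ys t
  proof -
    have c: "(\<forall>s\<le>Suc t. (i#j#ys) ! s \<in> A (Suc n - s))
       = (i \<in> A (Suc n) \<and> (\<forall>s\<le>t. (j#ys) ! s \<in> A (n - s)))"
      by (subst all_le_Suc) simp
    have pr: "(\<Prod>s<Suc t. p ((i#j#ys) ! s) ((i#j#ys) ! Suc s))
       = p i j * (\<Prod>s<t. p ((j#ys) ! s) ((j#ys) ! Suc s))"
      by (simp only: prod.lessThan_Suc_shift nth_Cons_0 nth_Cons_Suc)
    show ?thesis unfolding g_def c pr by auto
  qed
  have "fval S p R \<beta> A (Suc n) i = (if i\<in>A (Suc n) then R i else 0)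
     + (\<Sum>t<n. \<beta>^Suc t * (\<Sum>j\<in>S. \<Sum>ys\<in>path_set S t. g (Suc n) (i#j#ys) (Suc t)))"
    unfolding fv sum.lessThan_Suc_shift sum_path_Suc g0 by simp
  also have "\<dots> = (if i \<in> A (Suc n) then R i + \<beta> * (\<Sum>j\<in>S. p i j * fval S p R \<beta> A n j) else 0)"
  proof (cases "i \<in> A (Suc n)")
    case True
    have "(\<Sum>t<n. \<beta>^Suc t * (\<Sum>j\<in>S. \<Sum>ys\<in>path_set S t. g (Suc n) (i#j#ys) (Suc t)))
        = (\<Sum>t<n. \<Sum>j\<in>S. \<beta> * (p i j * (\<beta>^t * (\<Sum>ys\<in>path_set S t. g n (j#ys) t))))"
      using True by (simp add: gS sum_distrib_left mult_ac)
    also have "\<dots> = \<beta> * (\<Sum>j\<in>S. p i j * fval S p R \<beta> A n j)"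
      unfolding fv by (simp add: sum_distrib_left sum.swap[of _ "{..<n}"])
    finally show ?thesis using True by simp
  next
    case False
    then show ?thesis by (simp add: gS)
  qed
  finally show ?thesis .
qed

lemma fval_local:
  "(\<And>k. 1 \<le> k \<Longrightarrow> k \<le> n \<Longrightarrow> A k = B k) \<Longrightarrow> fval S p R \<beta> A n i = fval S p R \<beta> B n i"
proof (induction n arbitrary: i)
  case 0
  then show ?case by (simp add: fval_0)
next
  case (Suc n)
  have "fval S p R \<beta> A n j = fval S p R \<beta> B n j" for j
    using Suc.IH Suc.prems by simp
  moreover have "A (Suc n) = B (Suc n)" using Suc.prems by simp
  ultimately show ?case by (simp add: fval_Suc)
qed

lemma rval_Suc:
  "rval S p R \<beta> A (Suc n) i = R i + \<beta> * (\<Sum>j\<in>S. p i j * fval S p R \<beta> A n j)"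
proof -
  have "fval S p R \<beta> (upd A (Suc n) i) n j = fval S p R \<beta> A n j" for j
    by (rule fval_local) (simp add: upd_def)
  then show ?thesis unfolding rval_def by (simp add: fval_Suc upd_def)
qed

lemma fval_in: "j \<in> A m \<Longrightarrow> fval S p R \<beta> A m j = rval S p R \<beta> A m j"
  unfolding rval_def upd_def by (simp add: insert_absorb)

lemma fval_out: "j \<notin> A m \<Longrightarrow> fval S p R \<beta> A m j = 0"
  by (cases m) (simp_all add: fval_0 fval_Suc)

lemma rval_rec:
  assumes "finite S" "A n \<subseteq> S"
  shows "rval S p R \<beta> A (Suc n) i = R i + \<beta> * (\<Sum>j\<in>A n. p i j * rval S p R \<beta> A n j)"
proof -
  have "(\<Sum>j\<in>S. p i j * fval S p R \<beta> A n j)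
      = (\<Sum>j\<in>S. if j \<in> A n then p i j * rval S p R \<beta> A n j else 0)"
    by (rule sum.cong) (auto simp: fval_in fval_out)
  also have "\<dots> = (\<Sum>j\<in>S \<inter> A n. p i j * rval S p R \<beta> A n j)"
    using assms by (simp add: sum.inter_restrict)
  also have "S \<inter> A n = A n" using assms by blast
  finally show ?thesis by (simp add: rval_Suc)
qed

theorem lemma1:
  fixes S :: "'a set" and p :: "'a \<Rightarrow> 'a \<Rightarrow> real" and R :: "'a \<Rightarrow> real"
    and \<beta> :: real and T :: nat and A :: "nat \<Rightarrow> 'a set" and d :: nat and i :: 'a
  assumes finS: "finite S"
    and p_nonneg: "\<And>x y. x \<in> S \<Longrightarrow> y \<in> S \<Longrightarrow> 0 \<le> p x y"
    and p_stoch: "\<And>x. x \<in> S \<Longrightarrow> (\<Sum>y\<in>S. p x y) = 1"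
    and beta: "0 < \<beta>" "\<beta> \<le> 1"
    and mono: "\<And>k. 1 \<le> k \<Longrightarrow> k < T \<Longrightarrow> A k \<subseteq> A (Suc k)"
    and AT: "A T \<subseteq> S"
    and d: "1 \<le> d" "d \<le> T"
    and i: "i \<in> S"
  shows "((2 \<le> d \<longrightarrow> rval S p R \<beta> A d i
              = R i + \<beta> * (\<Sum>j\<in>A (d - 1). p i j * rval S p R \<beta> A (d - 1) j))
          \<and> rval S p R \<beta> A 1 i = R i)
       \<and> (\<forall>i'\<in>S - A d. rval S p R \<beta> (upd A d i') d i = rval S p R \<beta> A d i)
       \<and> (2 \<le> d \<longrightarrow> (\<forall>i'\<in>A d - A (d - 1).
            rval S p R \<beta> (upd A (d - 1) i') d i
              = rval S p R \<beta> A d i + \<beta> * p i i' * rval S p R \<beta> A (d - 1) i'))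
       \<and> (\<forall>s. 1 \<le> s \<and> s \<le> d - 2 \<longrightarrow> (\<forall>i'\<in>A (Suc s) - A s.
            rval S p R \<beta> (upd A s i') d i
              = R i + \<beta> * (\<Sum>j\<in>A (d - 1). p i j * rval S p R \<beta> (upd A s i') (d - 1) j)))"
proof -
  have chain: "A k \<subseteq> A (k + m)" if "1 \<le> k" "k + m \<le> T" for k m
    using that
  proof (induction m)
    case 0 then show ?case by simp
  next
    case (Suc m)
    then have "A k \<subseteq> A (k + m)" by simp
    also have "\<dots> \<subseteq> A (Suc (k + m))" using Suc.prems by (intro mono) auto
    finally show ?case by simp
  qed
  have AS: "A k \<subseteq> S" if "1 \<le> k" "k \<le> T" for k
    using chain[of k "T - k"] that AT by simp
  obtain n where dn: "d = Suc n" using d by (cases d) auto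
  have pa: "2 \<le> d \<longrightarrow> rval S p R \<beta> A d i
              = R i + \<beta> * (\<Sum>j\<in>A (d - 1). p i j * rval S p R \<beta> A (d - 1) j)"
  proof
    assume "2 \<le> d"
    then have "1 \<le> n" "n \<le> T" using dn d by auto
    then have "A n \<subseteq> S" using AS by blast
    then show "rval S p R \<beta> A d i
              = R i + \<beta> * (\<Sum>j\<in>A (d - 1). p i j * rval S p R \<beta> A (d - 1) j)"
      using rval_rec[OF finS, of A n] dn by simp
  qed
  have p1: "rval S p R \<beta> A 1 i = R i"
    by (simp add: rval_Suc[where n=0, simplified] fval_0)
  have pb: "\<forall>i'\<in>S - A d. rval S p R \<beta> (upd A d i') d i = rval S p R \<beta> A d i"
  proof
    fix i' assume "i' \<in> S - A d"
    have "fval S p R \<beta> (upd A d i') n j = fval S p R \<beta> A n j" for j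
      by (rule fval_local) (simp add: upd_def dn)
    then show "rval S p R \<beta> (upd A d i') d i = rval S p R \<beta> A d i"
      unfolding dn rval_Suc by simp
  qed
  have pc: "2 \<le> d \<longrightarrow> (\<forall>i'\<in>A d - A (d - 1).
            rval S p R \<beta> (upd A (d - 1) i') d i
              = rval S p R \<beta> A d i + \<beta> * p i i' * rval S p R \<beta> A (d - 1) i')"
  proof (intro impI ballI)
    fix i' assume d2: "2 \<le> d" and i': "i' \<in> A d - A (d - 1)"
    have i'S: "i' \<in> S" using i' AS[of d] d by auto
    have fB: "fval S p R \<beta> (upd A n i') n j
        = fval S p R \<beta> A n j + (if j = i' then rval S p R \<beta> A n i' else 0)" for j
    proof (cases "j = i'")
      case True
      then show ?thesis using i' dn by (simp add: rval_def fval_out)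
    next
      case False
      obtain m where nm: "n = Suc m" using d2 dn by (cases n) auto
      have "fval S p R \<beta> (upd A n i') m k = fval S p R \<beta> A m k" for k
        by (rule fval_local) (simp add: upd_def nm)
      then show ?thesis using False by (simp add: nm fval_Suc upd_def)
    qed
    have "rval S p R \<beta> (upd A n i') (Suc n) i
        = R i + \<beta> * (\<Sum>j\<in>S. p i j * fval S p R \<beta> A n j + (if j = i' then p i j * rval S p R \<beta> A n i' else 0))"
      unfolding rval_Suc fB by (auto simp: distrib_left intro!: sum.cong)
    also have "\<dots> = rval S p R \<beta> A (Suc n) i + \<beta> * p i i' * rval S p R \<beta> A n i'"
      using finS i'S by (simp add: sum.distrib rval_Suc distrib_left)
    finally show "rval S p R \<beta> (upd A (d - 1) i') d i
              = rval S p R \<beta> A d i + \<beta> * p i i' * rval S p R \<beta> A (d - 1) i'"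
      using dn by simp
  qed
  have pd: "\<forall>s. 1 \<le> s \<and> s \<le> d - 2 \<longrightarrow> (\<forall>i'\<in>A (Suc s) - A s.
            rval S p R \<beta> (upd A s i') d i
              = R i + \<beta> * (\<Sum>j\<in>A (d - 1). p i j * rval S p R \<beta> (upd A s i') (d - 1) j))"
  proof (intro allI impI ballI)
    fix s i' assume s: "1 \<le> s \<and> s \<le> d - 2" and i': "i' \<in> A (Suc s) - A s"
    have n1: "1 \<le> n" "n \<le> T" "s \<noteq> n" using s dn d by auto
    then have Bn: "upd A s i' n = A n" by (simp add: upd_def)
    have "A n \<subseteq> S" using AS n1 by blast
    then have BS: "upd A s i' n \<subseteq> S" by (simp only: Bn)
    have "rval S p R \<beta> (upd A s i') (Suc n) i
      = R i + \<beta> * (\<Sum>j\<in>upd A s i' n. p i j * rval S p R \<beta> (upd A s i') n j)"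
      by (rule rval_rec[where A="upd A s i'" and n=n, OF finS BS])
    then show "rval S p R \<beta> (upd A s i') d i
              = R i + \<beta> * (\<Sum>j\<in>A (d - 1). p i j * rval S p R \<beta> (upd A s i') (d - 1) j)"
      by (simp only: Bn dn diff_Suc_1)
  qed
  show ?thesis by (rule conjI[OF conjI[OF pa p1] conjI[OF pb conjI[OF pc pd]]])
qed

end
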